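(* If $S$ is a simply-connected shape in the triangular grid with at least two points, then $S$ has at least one strictly convex and erodable (SCE) point with respect to $S$.
   Context: The triangular grid $G$ has as vertices ("points") the points of the regular triangular lattice in the plane, two points adjacent iff at unit distance; each point has six incident edges, cyclically ordered clockwise. A shape is a finite set of points, identified with its induced subgraph. A connected shape $S$ partitions the plane into faces; the unique unbounded one is the outer face, and a bounded face containing a grid point not in $S$ is a hole. $S$ is simply-connected if it is connected and has no holes. The outer boundary of $S$ is the set of points of $S$ lying on the boundary of the outer face. A boundary point of $S$ is a point of $S$ adjacent to some point not in $S$. For a boundary point $v$, a local boundary $B$ of $v$ (w.r.t. $S$) is a maximal clockwise cyclic interval of consecutive edges incident to $v$ whose other endpoints are not in $S$; $|B|$ is its number of edges, and the boundary count of $v$ w.r.t. $B$ is $c(v,B)=|B|-2$. $v$ is strictly convex w.r.t. $B$ if $c(v,B)>0$. A point $v \in S$ is redundant if the subgraph induced by the neighbors of $v$ in $S$ is connected; it is erodable w.r.t. $S$ if it is redundant and on the outer boundary of $S$ (such a point has a single local boundary $B$). An erodable point that is strictly convex w.r.t. its single local boundary is called strictly convex and erodable (SCE) w.r.t. $S$. *)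

theory Defs
  imports "HOL-Analysis.Analysis"
begin

text \<open>The lattice is generated
by 1 and omega = exp(i pi/3); the six unit vectors omega^k (k = 0..5) are the six
directions around a point, in counterclockwise order (so clockwise order is decreasing k).\<close>

definition omega :: complex where
  "omega = cis (pi / 3)"

definition tri_points :: "complex set" where
  "tri_points = {of_int a + of_int b * omega | a b. True}"

definition tri_adj :: "complex \<Rightarrow> complex \<Rightarrow> bool" where
  "tri_adj u v \<longleftrightarrow> u \<in> tri_points \<and> v \<in> tri_points \<and> dist u v = 1"

definition shape :: "complex set \<Rightarrow> bool" where
  "shape S \<longleftrightarrow> finite S \<and> S \<subseteq> tri_points"

definition induced_connected :: "complex set \<Rightarrow> bool" where
  "induced_connected A \<longleftrightarrow>
     (\<forall>x\<in>A. \<forall>y\<in>A. (x, y) \<in> {(u, v). u \<in> A \<and> v \<in> A \<and> tri_adj u v}\<^sup>*)"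

definition drawing :: "complex set \<Rightarrow> complex set" where
  "drawing S = S \<union> \<Union>{closed_segment u v | u v. u \<in> S \<and> v \<in> S \<and> tri_adj u v}"

definition faces :: "complex set \<Rightarrow> complex set set" where
  "faces S = components (- drawing S)"

definition is_outer_face :: "complex set \<Rightarrow> complex set \<Rightarrow> bool" where
  "is_outer_face S F \<longleftrightarrow> F \<in> faces S \<and> \<not> bounded F"

definition is_hole :: "complex set \<Rightarrow> complex set \<Rightarrow> bool" where
  "is_hole S F \<longleftrightarrow> F \<in> faces S \<and> bounded F \<and> (\<exists>p \<in> tri_points - S. p \<in> F)"

definition simply_connected_shape :: "complex set \<Rightarrow> bool" where
  "simply_connected_shape S \<longleftrightarrow>
     shape S \<and> induced_connected S \<and> \<not> (\<exists>F. is_hole S F)"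

definition outer_boundary :: "complex set \<Rightarrow> complex set" where
  "outer_boundary S = {v \<in> S. \<exists>F. is_outer_face S F \<and> v \<in> frontier F}"

text \<open>An edge incident to v is identified by its direction index
k < 6 (the edge from v to v + omega^k).  A local boundary is a maximal cyclic interval
of consecutive directions whose other endpoints are not in S.\<close>
definition cyc_interval :: "nat \<Rightarrow> nat \<Rightarrow> nat set" where
  "cyc_interval i m = {(i + j) mod 6 | j. j < m}"

definition out_dirs :: "complex set \<Rightarrow> complex \<Rightarrow> nat set" where
  "out_dirs S v = {k. k < 6 \<and> v + omega ^ k \<notin> S}"

definition local_boundary :: "complex set \<Rightarrow> complex \<Rightarrow> nat set \<Rightarrow> bool" where
  "local_boundary S v B \<longleftrightarrow>
     v \<in> S \<and>
     (\<exists>i m. i < 6 \<and> 0 < m \<and> m \<le> 6 \<and> B = cyc_interval i m) \<and>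
     B \<subseteq> out_dirs S v \<and>
     (\<forall>i m. i < 6 \<and> m \<le> 6 \<and> B \<subset> cyc_interval i m \<longrightarrow> \<not> cyc_interval i m \<subseteq> out_dirs S v)"

definition boundary_count :: "nat set \<Rightarrow> int" where
  "boundary_count B = int (card B) - 2"

definition redundant :: "complex set \<Rightarrow> complex \<Rightarrow> bool" where
  "redundant S v \<longleftrightarrow> v \<in> S \<and> induced_connected {u \<in> S. tri_adj v u}"

definition erodable :: "complex set \<Rightarrow> complex \<Rightarrow> bool" where
  "erodable S v \<longleftrightarrow> redundant S v \<and> v \<in> outer_boundary S"

definition sce :: "complex set \<Rightarrow> complex \<Rightarrow> bool" where
  "sce S v \<longleftrightarrow> erodable S v \<and> (\<exists>B. local_boundary S v B \<and> boundary_count B > 0)"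

end

theory Submission
  imports Defs "HOL-Complex_Analysis.Complex_Analysis"
begin

lemma omega_eq: "omega = Complex (1/2) (sqrt 3 / 2)"
  by (simp add: omega_def complex_eq_iff cos_60 sin_60)

lemma Re_omega[simp]: "Re omega = 1/2" and Im_omega[simp]: "Im omega = sqrt 3 / 2"
  by (simp_all add: omega_eq)

lemma omega2: "omega^2 = omega - 1"
  by (simp add: omega_eq complex_eq_iff power2_eq_square field_simps)
lemma omega3: "omega^3 = -1"
  by (simp add: omega_eq complex_eq_iff power3_eq_cube field_simps)
lemma omega6: "omega^6 = 1"
proof -
  have "omega^6 = (omega^3)^2" by (simp flip: power_mult)
  thus ?thesis by (simp add: omega3)
qed

lemma omega_pow_mod: "omega^k = omega^(k mod 6)"
proof -
  have "omega^k = omega^(6 * (k div 6) + k mod 6)" by simp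
  also have "\<dots> = (omega^6)^(k div 6) * omega^(k mod 6)" by (simp only: power_add power_mult)
  also have "\<dots> = omega^(k mod 6)" by (simp add: omega6)
  finally show ?thesis .
qed

lemma omega_pow_add3: "omega^(k+3) = -(omega^k)"
  by (simp add: power_add omega3)

lemma omega_pow_cases: "k < 6 \<Longrightarrow> omega^k = 1 \<or> omega^k = omega \<or> omega^k = omega - 1
   \<or> omega^k = -1 \<or> omega^k = - omega \<or> omega^k = 1 - omega"
proof -
  assume "k < 6"
  then have "k = 0 \<or> k = 1 \<or> k = 2 \<or> k = 3 \<or> k = 4 \<or> k = 5" by auto
  moreover have "omega^4 = - omega" using omega_pow_add3[of 1] by simp
  moreover have "omega^5 = 1 - omega" using omega_pow_add3[of 2] by (simp add: omega2)
  ultimately show ?thesis using omega2 omega3 by auto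
qed

lemma cmod_omega_pow[simp]: "cmod (omega^k) = 1"
  by (simp add: omega_def norm_power)

lemma omega_cnj: "cnj omega = 1 - omega"
  by (simp add: omega_eq complex_eq_iff)

lemma omega_times_cnj: "omega * cnj omega = 1"
  by (simp add: omega_eq complex_eq_iff field_simps)

definition lat :: "real \<Rightarrow> real \<Rightarrow> complex" where
  "lat a b = of_real a + of_real b * omega"

lemma Re_lat[simp]: "Re (lat a b) = a + b/2" and Im_lat[simp]: "Im (lat a b) = b * sqrt 3 / 2"
  by (simp_all add: lat_def)

lemma lat_eq_iff: "lat a b = lat c d \<longleftrightarrow> a = c \<and> b = d"
  by (auto simp: complex_eq_iff)

lemma lat_add: "lat a b + lat c d = lat (a+c) (b+d)"
  by (simp add: lat_def algebra_simps)
lemma lat_diff: "lat a b - lat c d = lat (a-c) (b-d)"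
  by (simp add: lat_def algebra_simps)
lemma lat_scale: "of_real s * lat a b = lat (s*a) (s*b)"
  by (simp add: lat_def algebra_simps)
lemma lat_omega: "lat a b * omega = lat (-b) (a+b)"
proof -
  have "omega * omega = omega - 1" using omega2 by (simp add: power2_eq_square)
  have "lat a b * omega = of_real a * omega + of_real b * (omega * omega)" by (simp add: lat_def algebra_simps)
  also have "\<dots> = lat (-b) (a+b)" unfolding \<open>omega * omega = omega - 1\<close> by (simp add: lat_def algebra_simps)
  finally show ?thesis .
qed

lemma tri_points_iff: "z \<in> tri_points \<longleftrightarrow> (\<exists>a b::int. z = lat (of_int a) (of_int b))"
  by (auto simp: tri_points_def lat_def)

lemma tri_add: "z \<in> tri_points \<Longrightarrow> w \<in> tri_points \<Longrightarrow> z + w \<in> tri_points"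
  unfolding tri_points_iff by (auto simp: lat_add) (metis of_int_add)
lemma tri_diff: "z \<in> tri_points \<Longrightarrow> w \<in> tri_points \<Longrightarrow> z - w \<in> tri_points"
  unfolding tri_points_iff by (auto simp: lat_diff) (metis of_int_diff)
lemma tri_mult_omega: "z \<in> tri_points \<Longrightarrow> z * omega \<in> tri_points"
  unfolding tri_points_iff by (auto simp: lat_omega) (metis of_int_add of_int_minus)
lemma tri_mult_omega_pow: "z \<in> tri_points \<Longrightarrow> z * omega^n \<in> tri_points"
proof (induction n)
  case (Suc n)
  have "z * omega^Suc n = (z * omega^n) * omega" by (simp add: algebra_simps)
  then show ?case using Suc tri_mult_omega by presburger
qed simp
lemma tri_one: "1 \<in> tri_points"
  unfolding tri_points_iff by (rule exI[of _ 1], rule exI[of _ 0]) (simp add: lat_def)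
lemma tri_omega_pow: "omega^n \<in> tri_points"
  using tri_mult_omega_pow[OF tri_one] by simp
lemma tri_uminus: "z \<in> tri_points \<Longrightarrow> - z \<in> tri_points"
proof -
  have "0 \<in> tri_points" unfolding tri_points_iff by (rule exI[of _ 0], rule exI[of _ 0]) (simp add: lat_def)
  then show "z \<in> tri_points \<Longrightarrow> - z \<in> tri_points" using tri_diff[of 0 z] by simp
qed

lemma int_small: fixes p :: int
  assumes "-2 \<le> real_of_int p" "real_of_int p \<le> 2"
  shows "p \<in> {-2,-1,0,1,2}"
proof -
  have "-2 \<le> p" "p \<le> 2" using assms by linarith+
  then show ?thesis by auto
qed

lemma tri_adj_iff: assumes "v \<in> tri_points"
  shows "tri_adj v u \<longleftrightarrow> (\<exists>k<6. u = v + omega^k)"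
proof
  assume "\<exists>k<6. u = v + omega^k"
  then obtain k where "u = v + omega^k" by auto
  then show "tri_adj v u" using assms tri_add[OF assms tri_omega_pow[of k]]
    by (simp add: tri_adj_def dist_norm)
next
  assume "tri_adj v u"
  then have u: "u \<in> tri_points" and d: "cmod (u - v) = 1" by (auto simp: tri_adj_def dist_norm norm_minus_commute)
  obtain p q :: int where pq: "u - v = lat p q" using tri_diff[OF u assms] unfolding tri_points_iff by blast
  have "(Re (u-v))^2 + (Im (u-v))^2 = 1" using d by (simp add: cmod_def)
  then have "(p + q/2)^2 + (q * sqrt 3 / 2)^2 = (1::real)" by (simp add: pq)
  then have "real_of_int (p*p + p*q + q*q) = 1" by (simp add: power2_eq_square field_simps)
  then have e: "p*p + p*q + q*q = 1" by linarith
  have sq: "x*x \<le> 1 \<Longrightarrow> x \<in> {-1,0,1::int}" for x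
  proof -
    assume a: "x*x \<le> 1"
    have "x \<le> 1"
    proof (rule ccontr)
      assume "\<not> x \<le> 1" then have "2*2 \<le> x*x" by (intro mult_mono) auto
      then show False using a by simp
    qed
    moreover have "-1 \<le> x"
    proof (rule ccontr)
      assume "\<not> -1 \<le> x" then have "2*2 \<le> (-x)*(-x)" by (intro mult_mono) auto
      then show False using a by simp
    qed
    ultimately show ?thesis by auto
  qed
  have "(2*p+q)*(2*p+q) + 3*(q*q) = 4" using e by (simp add: algebra_simps)
  moreover have "0 \<le> (2*p+q)*(2*p+q)" by simp
  ultimately have "q*q \<le> 1" by linarith
  then have "q \<in> {-1,0,1}" using sq by blast
  have "(2*q+p)*(2*q+p) + 3*(p*p) = 4" using e by (simp add: algebra_simps)
  moreover have "0 \<le> (2*q+p)*(2*q+p)" by simp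
  ultimately have "p*p \<le> 1" by linarith
  then have "p \<in> {-1,0,1}" using sq by blast
  with \<open>q \<in> {-1,0,1}\<close> e
  have "(p = 1 \<and> q = 0) \<or> (p = 0 \<and> q = 1) \<or> (p = -1 \<and> q = 1) \<or> (p = -1 \<and> q = 0) \<or> (p = 0 \<and> q = -1) \<or> (p = 1 \<and> q = -1)"
    by auto
  moreover have om: "omega^0 = lat 1 0" "omega^1 = lat 0 1" "omega^2 = lat (-1) 1" "omega^3 = lat (-1) 0"
     "omega^4 = lat 0 (-1)" "omega^5 = lat 1 (-1)"
    using omega2 omega3 omega_pow_add3[of 1] omega_pow_add3[of 2] by (auto simp: lat_def)
  ultimately have "\<exists>k<6. u - v = omega^k" unfolding pq
  proof (elim disjE conjE)
    show "p = 1 \<Longrightarrow> q = 0 \<Longrightarrow> \<exists>k<6. lat (real_of_int p) (real_of_int q) = omega^k" by (intro exI[of _ 0]) (simp add: lat_def)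
    show "p = 0 \<Longrightarrow> q = 1 \<Longrightarrow> \<exists>k<6. lat (real_of_int p) (real_of_int q) = omega^k" by (intro exI[of _ 1]) (simp add: lat_def)
    show "p = -1 \<Longrightarrow> q = 1 \<Longrightarrow> \<exists>k<6. lat (real_of_int p) (real_of_int q) = omega^k" using om(3) by (intro exI[of _ 2]) simp
    show "p = -1 \<Longrightarrow> q = 0 \<Longrightarrow> \<exists>k<6. lat (real_of_int p) (real_of_int q) = omega^k" using om(4) by (intro exI[of _ 3]) simp
    show "p = 0 \<Longrightarrow> q = -1 \<Longrightarrow> \<exists>k<6. lat (real_of_int p) (real_of_int q) = omega^k" using om(5) by (intro exI[of _ 4]) simp
    show "p = 1 \<Longrightarrow> q = -1 \<Longrightarrow> \<exists>k<6. lat (real_of_int p) (real_of_int q) = omega^k" using om(6) by (intro exI[of _ 5]) simp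
  qed
  then show "\<exists>k<6. u = v + omega^k" by (metis add_diff_cancel_left' diff_add_cancel)
qed

lemma six_lat: "k < 6 \<Longrightarrow> omega^k = lat 1 0 \<or> omega^k = lat 0 1 \<or> omega^k = lat (-1) 1 \<or>
   omega^k = lat (-1) 0 \<or> omega^k = lat 0 (-1) \<or> omega^k = lat 1 (-1)"
  using omega_pow_cases[of k] by (auto simp: lat_def)

lemma ei_coord:
  fixes p q :: int and s t e1 e2 :: real
  assumes st: "0 < s" "s \<le> 1" "0 \<le> t" "t \<le> 1"
    and e: "(e1 = 1 \<and> e2 = 0) \<or> (e1 = 0 \<and> e2 = 1) \<or> (e1 = -1 \<and> e2 = 1) \<or> (e1 = -1 \<and> e2 = 0) \<or> (e1 = 0 \<and> e2 = -1) \<or> (e1 = 1 \<and> e2 = -1)"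
    and pq: "real_of_int p = s - t * e1" "real_of_int q = - t * e2"
  shows "(p = 1 \<and> q = 0) \<or> (real_of_int p = 1 - e1 \<and> real_of_int q = - e2)"
proof -
  have "-2 \<le> real_of_int p" "real_of_int p \<le> 2" "-2 \<le> real_of_int q" "real_of_int q \<le> 2"
    using e st pq by auto
  then have P: "p \<in> {-2,-1,0,1,2}" and Q: "q \<in> {-2,-1,0,1,2}" using int_small by blast+
  show ?thesis using e
  proof (elim disjE conjE)
    assume "e1 = 1" "e2 = 0" then show ?thesis using P Q pq st by auto
  next
    assume "e1 = 0" "e2 = 1" then show ?thesis using P Q pq st by auto
  next
    assume "e1 = -1" "e2 = 1" then show ?thesis using P Q pq st by auto
  next
    assume "e1 = -1" "e2 = 0" then show ?thesis using P Q pq st by auto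
  next
    assume "e1 = 0" "e2 = -1" then show ?thesis using P Q pq st by auto
  next
    assume "e1 = 1" "e2 = -1" then show ?thesis using P Q pq st by auto
  qed
qed


lemma lat_real: "of_real s = lat s 0" by (simp add: lat_def)

lemma ei0:
  assumes a: "a \<in> tri_points" and b: "b \<in> tri_points" and k: "k < 6"
    and st: "0 < s" "s \<le> 1" "0 \<le> t" "t \<le> 1"
    and eq: "a + of_real s = b + of_real t * omega^k"
  shows "a + 1 = b \<or> a + 1 = b + omega^k"
proof -
  obtain p q :: int where pq: "b - a = lat p q" using tri_diff[OF b a] unfolding tri_points_iff by blast
  obtain e1 e2 where e: "(e1 = 1 \<and> e2 = 0) \<or> (e1 = 0 \<and> e2 = 1) \<or> (e1 = -1 \<and> e2 = 1) \<or> (e1 = -1 \<and> e2 = 0) \<or> (e1 = 0 \<and> e2 = -1) \<or> (e1 = 1 \<and> e2 = -1)"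
     and ok: "omega^k = lat e1 e2"
    using six_lat[OF k] by blast
  have "lat p q = of_real s - of_real t * omega^k" using eq pq by (simp add: algebra_simps)
  also have "\<dots> = lat (s - t * e1) (- t * e2)" unfolding ok lat_scale by (simp add: lat_def algebra_simps)
  finally have "real_of_int p = s - t * e1" "real_of_int q = - t * e2" by (simp_all add: lat_eq_iff)
  from ei_coord[OF st e this]
  have "(p = 1 \<and> q = 0) \<or> (real_of_int p = 1 - e1 \<and> real_of_int q = - e2)" .
  then show ?thesis
  proof
    assume "p = 1 \<and> q = 0"
    then have "b - a = 1" using pq by (simp add: lat_def)
    then show ?thesis by (simp add: algebra_simps)
  next
    assume "real_of_int p = 1 - e1 \<and> real_of_int q = - e2"
    then have "b - a = lat 1 0 - lat e1 e2" using pq by (simp add: lat_diff)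
    then have "b - a = 1 - omega^k" using ok by (simp add: lat_def)
    then show ?thesis by (simp add: algebra_simps)
  qed
qed

lemma ei:
  assumes a: "a \<in> tri_points" and b: "b \<in> tri_points"
    and st: "0 < s" "s \<le> 1" "0 \<le> t" "t \<le> 1"
    and eq: "a + of_real s * omega^j = b + of_real t * omega^k"
  shows "a + omega^j = b \<or> a + omega^j = b + omega^k"
proof -
  define r where "r = omega^(5*j)"
  have jr: "omega^j * r = 1" unfolding r_def
  proof -
    have "omega^j * omega^(5*j) = omega^(6*j)" by (simp add: power_add[symmetric])
    also have "\<dots> = 1" by (simp add: power_mult omega6)
    finally show "omega ^ j * omega ^ (5 * j) = 1" .
  qed
  define k' where "k' = (k + 5*j) mod 6"
  have kr: "omega^k * r = omega^k'" unfolding r_def k'_def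
    by (simp add: power_add[symmetric] omega_pow_mod[symmetric])
  have "a * r + of_real s = b * r + of_real t * omega^k'"
  proof -
    have "(a + of_real s * omega^j) * r = (b + of_real t * omega^k) * r" using eq by simp
    moreover have "(a + of_real s * omega^j) * r = a * r + of_real s * (omega^j * r)" by (simp add: algebra_simps)
    moreover have "(b + of_real t * omega^k) * r = b * r + of_real t * (omega^k * r)" by (simp add: algebra_simps)
    ultimately show ?thesis using jr kr by simp
  qed
  from ei0[OF tri_mult_omega_pow[OF a] tri_mult_omega_pow[OF b] _ st this[unfolded r_def]]
  have "a * r + 1 = b * r \<or> a * r + 1 = b * r + omega^k'" unfolding r_def k'_def by simp
  then have "(a * r + 1) * omega^j = (b * r) * omega^j \<or> (a * r + 1) * omega^j = (b * r + omega^k') * omega^j"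
    by auto
  moreover have "omega^k' * omega^j = omega^k"
  proof -
    have "omega^k' * omega^j = omega^k * r * omega^j" using kr by simp
    also have "\<dots> = omega^k * (omega^j * r)" by (simp add: algebra_simps)
    finally show ?thesis using jr by simp
  qed
  ultimately show ?thesis using jr by (simp add: algebra_simps)
qed

lemma seg_param: "z \<in> closed_segment a (a + w) \<longleftrightarrow> (\<exists>t. 0 \<le> t \<and> t \<le> 1 \<and> z = a + of_real t * w)"
  by (auto simp: closed_segment_def scaleR_conv_of_real algebra_simps)

lemma lattice_on_edge:
  assumes v: "v \<in> tri_points" and b: "b \<in> tri_points" and z: "v \<in> closed_segment b (b + omega^k)"
  shows "v = b \<or> v = b + omega^k"
proof -
  obtain t where t: "0 \<le> t" "t \<le> 1" "v = b + of_real t * omega^k" using z seg_param by blast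
  show ?thesis
  proof (cases "t = 0")
    case True then show ?thesis using t by simp
  next
    case False
    then have "0 < t" using t by simp
    have "b + of_real t * omega^k = v + of_real 0 * omega^k" using t by simp
    from ei[OF b v \<open>0 < t\<close> \<open>t \<le> 1\<close> _ _ this] show ?thesis by auto
  qed
qed

lemma seg_avoid:
  assumes v: "v \<in> tri_points" and b: "b \<in> tri_points"
    and z1: "z \<in> closed_segment v (v + omega^k)" and zv: "z \<noteq> v"
    and z2: "z \<in> closed_segment b (b + omega^j)"
  shows "v + omega^k = b \<or> v + omega^k = b + omega^j"
proof -
  obtain s where s: "0 \<le> s" "s \<le> 1" "z = v + of_real s * omega^k" using z1 seg_param by blast
  obtain t where t: "0 \<le> t" "t \<le> 1" "z = b + of_real t * omega^j" using z2 seg_param by blast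
  have "0 < s" using s zv by (cases "s = 0") auto
  from ei[OF v b this \<open>s \<le> 1\<close> t(1,2)] s t show ?thesis by simp
qed

lemma edge_form:
  assumes "u \<in> tri_points" "tri_adj u w"
  obtains j where "j < 6" "w = u + omega^j"
  using tri_adj_iff assms by blast

lemma drawing_iff: "z \<in> drawing S \<longleftrightarrow> z \<in> S \<or> (\<exists>u w. u \<in> S \<and> w \<in> S \<and> tri_adj u w \<and> z \<in> closed_segment u w)"
  by (auto simp: drawing_def)

lemma not_in_drawing:
  assumes S: "S \<subseteq> tri_points" and v: "v \<in> tri_points" and p: "v + omega^k \<notin> S"
    and z: "z \<in> closed_segment v (v + omega^k)" and zv: "z \<noteq> v"
  shows "z \<notin> drawing S"
proof
  assume "z \<in> drawing S"
  then consider "z \<in> S" | u w where "u \<in> S" "w \<in> S" "tri_adj u w" "z \<in> closed_segment u w"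
    unfolding drawing_iff by blast
  then show False
  proof cases
    case 1
    then have "z \<in> tri_points" using S by auto
    from lattice_on_edge[OF this v z] show False using zv p 1 by auto
  next
    case 2
    have u: "u \<in> tri_points" using 2 S by auto
    obtain j where "w = u + omega^j" using edge_form[OF u 2(3)] by blast
    from seg_avoid[OF v u z zv 2(4)[unfolded this]] show False using 2 p \<open>w = u + omega^j\<close> by auto
  qed
qed

lemma S_sub_drawing: "S \<subseteq> drawing S" by (auto simp: drawing_def)

lemma omega_nz[simp]: "omega \<noteq> 0" by (simp add: omega_eq complex_eq_iff)

lemma omega_pow_nz[simp]: "omega^k \<noteq> 0"
proof
  assume "omega^k = 0" then have "cmod (omega^k) = 0" by simp
  then show False by simp
qed

lemma outer_bd:
  assumes sc: "simply_connected_shape S" and vS: "v \<in> S" and p: "v + omega^k \<notin> S"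
  shows "v \<in> outer_boundary S"
proof -
  have S: "S \<subseteq> tri_points" using sc by (auto simp: simply_connected_shape_def shape_def)
  have v: "v \<in> tri_points" using vS S by auto
  define p where "p = v + omega^k"
  have ptri: "p \<in> tri_points" unfolding p_def by (rule tri_add[OF v tri_omega_pow])
  have avoid: "z \<notin> drawing S" if "z \<in> closed_segment v p" "z \<noteq> v" for z
    using not_in_drawing[OF S v p] that unfolding p_def by blast
  have pnd: "p \<notin> drawing S" by (rule avoid) (auto simp: p_def)
  define F where "F = connected_component_set (- drawing S) p"
  have Ff: "F \<in> faces S" unfolding F_def faces_def using pnd by (intro componentsI) simp
  have pF: "p \<in> F" unfolding F_def using pnd by (simp add: connected_component_refl)
  have "\<not> is_hole S F" using sc by (auto simp: simply_connected_shape_def)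
  then have nb: "\<not> bounded F" using Ff pF ptri p unfolding is_hole_def p_def by blast
  have outer: "is_outer_face S F" using Ff nb by (simp add: is_outer_face_def)
  have Fsub: "F \<subseteq> - drawing S" unfolding F_def by (rule connected_component_subset)
  have vF: "v \<notin> F" using Fsub vS S_sub_drawing by blast
  have "v \<in> closure F"
    unfolding closure_approachable
  proof (intro allI impI)
    fix e :: real assume "0 < e"
    define t where "t = min (e/2) 1"
    have t: "0 < t" "t \<le> 1" "t < e" using \<open>0 < e\<close> by (auto simp: t_def)
    define y where "y = v + of_real t * omega^k"
    have "closed_segment y p \<subseteq> - drawing S"
    proof
      fix z assume z: "z \<in> closed_segment y p"
      have "p = y + of_real (1 - t) * omega^k" by (simp add: y_def p_def algebra_simps)
      then obtain l where l: "0 \<le> l" "l \<le> 1" "z = y + of_real l * (of_real (1 - t) * omega^k)"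
        using z seg_param[of z y "of_real (1 - t) * omega^k"] by auto
      define c where "c = t + l * (1 - t)"
      have c: "0 < c" "c \<le> 1"
        using t l unfolding c_def by (auto intro!: add_pos_nonneg mult_nonneg_nonneg)
          (smt (verit) mult_left_le_one_le)
      have zc: "z = v + of_real c * omega^k" by (simp add: l(3) y_def c_def algebra_simps)
      have "z \<in> closed_segment v p" unfolding p_def seg_param using zc c by auto
      moreover have "z \<noteq> v" using zc c by simp
      ultimately show "z \<in> - drawing S" using avoid by blast
    qed
    then have "closed_segment y p \<subseteq> F" unfolding F_def
      by (intro connected_component_maximal) auto
    then have "y \<in> F" by auto
    moreover have "dist y v < e" using t by (simp add: y_def dist_norm norm_mult)
    ultimately show "\<exists>y\<in>F. dist y v < e" by blast
  qed
  then have "v \<in> frontier F" using vF interior_subset[of F] by (auto simp: frontier_def)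
  then show ?thesis using outer vS unfolding outer_boundary_def by blast
qed

lemma seg_affine:
  fixes u v a b c :: complex
  assumes "u \<noteq> 0"
  shows "(v + u*a \<in> closed_segment (v + u*b) (v + u*c)) \<longleftrightarrow> (a \<in> closed_segment b c)"
proof -
  have "(v + u*a = (1 - t) *\<^sub>R (v + u*b) + t *\<^sub>R (v + u*c)) \<longleftrightarrow> (a = (1 - t) *\<^sub>R b + t *\<^sub>R c)" for t
  proof -
    have "(1 - t) *\<^sub>R (v + u*b) + t *\<^sub>R (v + u*c) = v + u * ((1 - t) *\<^sub>R b + t *\<^sub>R c)"
      unfolding scaleR_conv_of_real by (simp add: algebra_simps)
    then show ?thesis using assms by simp
  qed
  then show ?thesis by (simp add: closed_segment_def)
qed

lemma seg_affine': 
  fixes u v z b c :: complex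
  assumes "u \<noteq> 0"
  shows "(z \<in> closed_segment (v + u*b) (v + u*c)) \<longleftrightarrow> ((z - v)/u \<in> closed_segment b c)"
proof -
  have "u * ((z - v)/u) = z - v" using assms by simp
  then have "z = v + u * ((z - v)/u)" by simp
  then show ?thesis using seg_affine[OF assms, of v "(z-v)/u" b c] by metis
qed

lemma seg_re_im: "z \<in> closed_segment a b \<Longrightarrow> \<exists>t. 0 \<le> t \<and> t \<le> 1 \<and> Re z = Re a + t*(Re b - Re a) \<and> Im z = Im a + t*(Im b - Im a)"
proof -
  assume "z \<in> closed_segment a b"
  then obtain t where t: "0 \<le> t" "t \<le> 1" "z = (1 - t) *\<^sub>R a + t *\<^sub>R b" by (auto simp: closed_segment_def)
  then show ?thesis by (intro exI[of _ t]) (simp add: algebra_simps complex_eq_iff)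
qed

lemma seg_re_im': "0 \<le> t \<Longrightarrow> t \<le> 1 \<Longrightarrow> Re z = Re a + t*(Re b - Re a) \<Longrightarrow> Im z = Im a + t*(Im b - Im a) \<Longrightarrow> z \<in> closed_segment a b"
  unfolding closed_segment_def
  by (rule CollectI, rule exI[of _ t]) (auto simp: scaleR_conv_of_real algebra_simps complex_eq_iff)

lemma sqrt3_pos: "0 < sqrt (3::real)" by simp

lemma N_real_not_in1:
  assumes "Im z = 0" "Re z \<noteq> 0" shows "z \<notin> closed_segment (cnj omega) 0" "z \<notin> closed_segment 0 omega"
  using assms sqrt3_pos by (auto dest!: seg_re_im simp: omega_eq)

lemma N_real_not_in2:
  assumes "Im z = 0" "Re z < 1/2" shows "z \<notin> closed_segment (cnj omega) omega"
  using assms by (auto dest!: seg_re_im simp: omega_eq)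

lemma uprod: "u * cnj u = 1 \<Longrightarrow> (u * a) * cnj (u * b) = a * cnj b"
  by (simp add: algebra_simps)

lemma key_wn:
  fixes u v :: complex and P :: "real \<Rightarrow> complex"
  assumes u: "u * cnj u = 1" and P: "path P" "pathstart P = v + u * omega" "pathfinish P = v + u * cnj omega"
    and avoid: "path_image P \<inter> closed_segment (v - u) (v + u) = {}"
  shows "winding_number (linepath (v + u * cnj omega) v +++ (linepath v (v + u * omega) +++ P)) (v + u)
       \<noteq> winding_number (linepath (v + u * cnj omega) v +++ (linepath v (v + u * omega) +++ P)) (v - u)"
proof -
  have u0: "u \<noteq> 0" using u by auto
  define x where "x = v + u * cnj omega"
  define y where "y = v + u * omega"
  define m where "m = v + u * (1/4)"
  define q1 where "q1 = v + u * 1"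
  define q2 where "q2 = v + u * (-1)"
  have vv: "v = v + u * 0" by simp
  note aff = seg_affine'[OF u0]
  have seg_xv: "z \<in> closed_segment x v \<longleftrightarrow> (z - v)/u \<in> closed_segment (cnj omega) 0" for z
    unfolding x_def by (subst (2) vv) (rule aff)
  have seg_vy: "z \<in> closed_segment v y \<longleftrightarrow> (z - v)/u \<in> closed_segment 0 omega" for z
    unfolding y_def by (subst (1) vv) (rule aff)
  have seg_xy: "z \<in> closed_segment x y \<longleftrightarrow> (z - v)/u \<in> closed_segment (cnj omega) omega" for z
    unfolding x_def y_def by (rule aff)
  have seg_yx: "closed_segment y x = closed_segment x y" by (rule closed_segment_commute)
  have seg_mq1: "z \<in> closed_segment m q1 \<longleftrightarrow> (z - v)/u \<in> closed_segment (1/4) 1" for z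
    unfolding m_def q1_def by (rule aff)
  have seg_q2m: "z \<in> closed_segment q2 m \<longleftrightarrow> (z - v)/u \<in> closed_segment (-1) (1/4)" for z
    unfolding m_def q2_def by (rule aff)
  have seg_q: "closed_segment (v - u) (v + u) = closed_segment q2 q1" unfolding q1_def q2_def by simp
  have dv: "(v + u * a - v)/u = a" for a using u0 by simp
  have real_seg: "z \<in> closed_segment (of_real a) (of_real b) \<Longrightarrow> Im z = 0 \<and> min a b \<le> Re z \<and> Re z \<le> max a b" for z a b
  proof -
    assume "z \<in> closed_segment (of_real a) (of_real b)"
    from seg_re_im[OF this] obtain t where t: "0 \<le> t" "t \<le> 1" "Re z = a + t*(b - a)" "Im z = 0" by auto
    show ?thesis
    proof (cases "a \<le> b")
      case True
      have "0 \<le> t*(b-a)" "t*(b-a) \<le> b - a" using True t by (auto intro: mult_left_le_one_le)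
      then show ?thesis using t True by (auto simp: min_def max_def)
    next
      case False
      have "0 \<le> t*(a-b)" "t*(a-b) \<le> a - b" using False t by (auto intro: mult_left_le_one_le)
      then show ?thesis using t False by (auto simp: min_def max_def algebra_simps)
    qed
  qed
  have sub1: "closed_segment m q1 \<subseteq> closed_segment q2 q1"
  proof -
    have "m \<in> closed_segment q2 q1" unfolding m_def q2_def q1_def aff dv
      by (rule seg_re_im'[of "5/8"]) auto
    moreover have "q1 \<in> closed_segment q2 q1" by simp
    ultimately show ?thesis by (simp add: subset_closed_segment)
  qed
  have sub2: "closed_segment q2 m \<subseteq> closed_segment q2 q1"
  proof -
    have "m \<in> closed_segment q2 q1" unfolding m_def q2_def q1_def aff dv
      by (rule seg_re_im'[of "5/8"]) auto
    moreover have "q2 \<in> closed_segment q2 q1" by simp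
    ultimately show ?thesis by (simp add: subset_closed_segment)
  qed
  have Pq: "path_image P \<inter> closed_segment q2 q1 = {}" using avoid seg_q by simp
  have mq1_xv: "z \<notin> closed_segment x v" and mq1_vy: "z \<notin> closed_segment v y"
    if "z \<in> closed_segment m q1" for z
  proof -
    have "(z - v)/u \<in> closed_segment (of_real (1/4)) (of_real 1)" using that seg_mq1 by simp
    from real_seg[OF this] have "Im ((z-v)/u) = 0" "Re ((z-v)/u) \<noteq> 0" by auto
    from N_real_not_in1[OF this] show "z \<notin> closed_segment x v" "z \<notin> closed_segment v y"
      using seg_xv seg_vy by auto
  qed
  have q2m_xy: "z \<notin> closed_segment x y" if "z \<in> closed_segment q2 m" for z
  proof -
    have "(z - v)/u \<in> closed_segment (of_real (-1)) (of_real (1/4))" using that seg_q2m by simp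
    from real_seg[OF this] have "Im ((z-v)/u) = 0" "Re ((z-v)/u) < 1/2" by auto
    from N_real_not_in2[OF this] show ?thesis using seg_xy by auto
  qed
  have q2_xv: "q2 \<notin> closed_segment x v" and q2_vy: "q2 \<notin> closed_segment v y"
  proof -
    have "Im ((q2-v)/u) = 0" "Re ((q2-v)/u) \<noteq> 0" unfolding q2_def dv by auto
    from N_real_not_in1[OF this] show "q2 \<notin> closed_segment x v" "q2 \<notin> closed_segment v y"
      using seg_xv seg_vy by auto
  qed
  have m_in: "m \<in> closed_segment m q1" and q1_in: "q1 \<in> closed_segment m q1"
   and q2_in: "q2 \<in> closed_segment q2 m" and m_in2: "m \<in> closed_segment q2 m" by auto
  define A1 where "A1 = linepath x v"
  define A2 where "A2 = linepath v y"
  define L where "L = linepath y x"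
  define L' where "L' = linepath x y"
  define \<gamma> where "\<gamma> = A1 +++ (A2 +++ P)"
  define T where "T = A1 +++ (A2 +++ L)"
  define \<rho> where "\<rho> = L' +++ P"
  have Pst: "pathstart P = y" and Pfi: "pathfinish P = x" using P by (auto simp: x_def y_def)
  have pg: "path \<gamma>" and pT: "path T" and p\<rho>: "path \<rho>"
    using P(1) Pst Pfi by (auto simp: \<gamma>_def T_def \<rho>_def A1_def A2_def L_def L'_def)
  have cg: "pathfinish \<gamma> = pathstart \<gamma>" and cT: "pathfinish T = pathstart T" and c\<rho>: "pathfinish \<rho> = pathstart \<rho>"
    using Pst Pfi by (auto simp: \<gamma>_def T_def \<rho>_def A1_def A2_def L_def L'_def)
  have ig: "path_image \<gamma> = closed_segment x v \<union> closed_segment v y \<union> path_image P"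
    using Pst Pfi by (auto simp: \<gamma>_def A1_def A2_def path_image_join)
  have iT: "path_image T = closed_segment x v \<union> closed_segment v y \<union> closed_segment x y"
    by (simp add: T_def A1_def A2_def L_def path_image_join seg_yx Un_assoc)
  have i\<rho>: "path_image \<rho> = closed_segment x y \<union> path_image P"
    using Pst by (auto simp: \<rho>_def L'_def path_image_join)
  have decomp: "winding_number \<gamma> z = winding_number T z + winding_number \<rho> z"
    if z: "z \<notin> closed_segment x v" "z \<notin> closed_segment v y" "z \<notin> closed_segment x y" "z \<notin> path_image P" for z
  proof -
    have zyx: "z \<notin> closed_segment y x" using z(3) closed_segment_commute by metis
    have "winding_number \<gamma> z = winding_number A1 z + (winding_number A2 z + winding_number P z)"
      unfolding \<gamma>_def using z P(1) Pst
      by (simp add: winding_number_join A1_def A2_def path_image_join)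
    moreover have "winding_number T z = winding_number A1 z + (winding_number A2 z + winding_number L z)"
      unfolding T_def using z zyx
      by (simp add: winding_number_join A1_def A2_def L_def path_image_join)
    moreover have "winding_number \<rho> z = winding_number L' z + winding_number P z"
      unfolding \<rho>_def using z P(1) Pst
      by (simp add: winding_number_join L'_def)
    moreover have "winding_number L z = - winding_number L' z"
    proof -
      have "L = reversepath L'" by (simp add: L_def L'_def)
      then show ?thesis using z winding_number_reversepath[of L' z] by (simp add: L'_def)
    qed
    ultimately show ?thesis by simp
  qed
  have m_xv: "m \<notin> closed_segment x v" and m_vy: "m \<notin> closed_segment v y" using mq1_xv mq1_vy m_in by auto
  have m_xy: "m \<notin> closed_segment x y" using q2m_xy m_in2 by auto
  have m_P: "m \<notin> path_image P" using Pq sub1 m_in by auto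
  have q2_xy: "q2 \<notin> closed_segment x y" using q2m_xy q2_in by auto
  have q2_P: "q2 \<notin> path_image P" using Pq sub2 q2_in by auto
  have wTm: "winding_number T m \<noteq> 0"
  proof -
    have s3: "sqrt 3 > (0::real)" by simp
    have r1: "Re (winding_number A1 m) < 0" unfolding A1_def
    proof (rule winding_number_linepath_neg_lt)
      have eq: "(x - v) * cnj (x - m) = cnj omega * cnj (cnj omega - 1/4)"
      proof -
        have "(x - v) * cnj (x - m) = (u * cnj omega) * cnj (u * (cnj omega - 1/4))" by (simp add: x_def m_def algebra_simps)
        also have "\<dots> = cnj omega * cnj (cnj omega - 1/4)" by (rule uprod[OF u])
        finally show ?thesis .
      qed
      show "0 < Im ((x - v) * cnj (x - m))" unfolding eq by (simp add: omega_eq s3)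
    qed
    have r2: "Re (winding_number A2 m) < 0" unfolding A2_def
    proof (rule winding_number_linepath_neg_lt)
      have eq: "(v - y) * cnj (v - m) = (- omega) * cnj (- 1/4)"
      proof -
        have "(v - y) * cnj (v - m) = (u * (- omega)) * cnj (u * (- 1/4))" by (simp add: y_def m_def algebra_simps)
        also have "\<dots> = (- omega) * cnj (- 1/4)" by (rule uprod[OF u])
        finally show ?thesis .
      qed
      show "0 < Im ((v - y) * cnj (v - m))" unfolding eq by (simp add: omega_eq s3)
    qed
    have r3: "Re (winding_number L m) < 0" unfolding L_def
    proof (rule winding_number_linepath_neg_lt)
      have eq: "(y - x) * cnj (y - m) = (omega - cnj omega) * cnj (omega - 1/4)"
      proof -
        have "(y - x) * cnj (y - m) = (u * (omega - cnj omega)) * cnj (u * (omega - 1/4))" by (simp add: x_def y_def m_def algebra_simps)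
        also have "\<dots> = (omega - cnj omega) * cnj (omega - 1/4)" by (rule uprod[OF u])
        finally show ?thesis .
      qed
      show "0 < Im ((y - x) * cnj (y - m))" unfolding eq by (simp add: omega_eq s3)
    qed
    have m_yx: "m \<notin> closed_segment y x" using m_xy closed_segment_commute by metis
    have "winding_number T m = winding_number A1 m + (winding_number A2 m + winding_number L m)"
      unfolding T_def using m_xv m_vy m_yx
      by (simp add: winding_number_join A1_def A2_def L_def path_image_join)
    then have "Re (winding_number T m) < 0" using r1 r2 r3 by simp
    then show ?thesis by auto
  qed
  have wTq2: "winding_number T q2 = 0"
  proof (rule winding_number_zero_outside[OF pT convex_convex_hull cT])
    have "closed_segment a b \<subseteq> convex hull {x, v, y}" if "a \<in> {x,v,y}" "b \<in> {x,v,y}" for a b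
      using that by (simp add: segment_convex_hull hull_mono)
    then show "path_image T \<subseteq> convex hull {x, v, y}" unfolding iT by auto
    show "q2 \<notin> convex hull {x, v, y}"
    proof
      assume "q2 \<in> convex hull {x, v, y}"
      then obtain l1 l2 l3 where l: "0 \<le> l1" "0 \<le> l2" "0 \<le> l3" "l1 + l2 + l3 = 1"
        and e: "q2 = l1 *\<^sub>R x + l2 *\<^sub>R v + l3 *\<^sub>R y"
        unfolding convex_hull_3 by blast
      have "l1 *\<^sub>R x + l2 *\<^sub>R v + l3 *\<^sub>R y = of_real (l1 + l2 + l3) * v + u * (of_real l1 * cnj omega + of_real l3 * omega)"
        by (simp add: x_def y_def scaleR_conv_of_real algebra_simps)
      then have "v + u * (-1) = v + u * (of_real l1 * cnj omega + of_real l3 * omega)"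
        using e l(4) by (simp add: q2_def)
      then have "u * (-1) = u * (of_real l1 * cnj omega + of_real l3 * omega)" by simp
      then have "-1 = of_real l1 * cnj omega + of_real l3 * omega" using u0 mult_left_cancel by blast
      then have "Re (-1) = Re (of_real l1 * cnj omega + of_real l3 * omega)" by (rule arg_cong)
      then have "-1 = l1 / 2 + l3 / 2" by (simp add: omega_eq)
      then show False using l by linarith
    qed
  qed
  have e1: "winding_number \<gamma> q1 = winding_number \<gamma> m"
    by (rule winding_number_eq[OF pg cg q1_in m_in connected_segment])
       (use mq1_xv mq1_vy Pq sub1 in \<open>auto simp: ig\<close>)
  have e2: "winding_number \<rho> m = winding_number \<rho> q2"
    by (rule winding_number_eq[OF p\<rho> c\<rho> m_in2 q2_in connected_segment])
       (use q2m_xy Pq sub2 in \<open>auto simp: i\<rho>\<close>)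
  have "winding_number \<gamma> q1 = winding_number T m + winding_number \<rho> m"
    using e1 decomp[OF m_xv m_vy m_xy m_P] by simp
  also have "\<dots> = winding_number T m + winding_number \<gamma> q2"
    using e2 decomp[OF q2_xv q2_vy q2_xy q2_P] wTq2 by simp
  finally have "winding_number \<gamma> q1 \<noteq> winding_number \<gamma> q2" using wTm by simp
  then show ?thesis unfolding \<gamma>_def A1_def A2_def x_def y_def q1_def q2_def by simp
qed

definition RA :: "complex set \<Rightarrow> (complex \<times> complex) set" where
  "RA A = {(u, w). u \<in> A \<and> w \<in> A \<and> tri_adj u w}"

lemma drawing_mono: "A \<subseteq> B \<Longrightarrow> drawing A \<subseteq> drawing B"
  unfolding drawing_def by blast

lemma edge_in_drawing: "u \<in> A \<Longrightarrow> w \<in> A \<Longrightarrow> tri_adj u w \<Longrightarrow> closed_segment u w \<subseteq> drawing A"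
  unfolding drawing_def by blast

lemma poly_path:
  assumes "(a, b) \<in> (RA A)\<^sup>*" "a \<in> A"
  shows "\<exists>g. path g \<and> pathstart g = a \<and> pathfinish g = b \<and> path_image g \<subseteq> drawing A"
  using assms(1)
proof (induction rule: rtrancl_induct)
  case base
  have "path (linepath a a)" "pathstart (linepath a a) = a" "pathfinish (linepath a a) = a"
       "path_image (linepath a a) = {a}"
    by (simp_all only: path_linepath pathstart_linepath pathfinish_linepath path_image_linepath closed_segment_idem)
  moreover have "{a} \<subseteq> drawing A" using assms(2) by (auto simp: drawing_def)
  ultimately show ?case by (intro exI[of _ "linepath a a"]) blast
next
  case (step y z)
  then obtain g where g: "path g" "pathstart g = a" "pathfinish g = y" "path_image g \<subseteq> drawing A" by blast
  have yz: "y \<in> A" "z \<in> A" "tri_adj y z" using step(2) by (auto simp: RA_def)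
  show ?case
    using g edge_in_drawing[OF yz]
    by (intro exI[of _ "g +++ linepath y z"]) (auto simp: path_image_join)
qed

lemma not_on_edge_vertex:
  assumes S: "S \<subseteq> tri_points" and v: "v \<in> tri_points" "v \<notin> S"
  shows "v \<notin> drawing S"
proof
  assume "v \<in> drawing S"
  then obtain b w where bw: "b \<in> S" "w \<in> S" "tri_adj b w" "v \<in> closed_segment b w"
    using v unfolding drawing_iff by blast
  have b: "b \<in> tri_points" using bw S by auto
  obtain j where "w = b + omega^j" using edge_form[OF b bw(3)] by blast
  with lattice_on_edge[OF v(1) b] bw v show False by auto
qed

lemma no_V_connection:
  assumes sc: "simply_connected_shape S" and vS: "v \<in> S"
    and xS: "v + omega^a \<in> S" and yS: "v + omega^(a+2) \<in> S"
    and q1S: "v + omega^(a+1) \<notin> S" and q2S: "v + omega^(a+4) \<notin> S"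
    and conn: "(v + omega^a, v + omega^(a+2)) \<in> (RA (S - {v}))\<^sup>*"
  shows False
proof -
  have S: "S \<subseteq> tri_points" using sc by (auto simp: simply_connected_shape_def shape_def)
  have v: "v \<in> tri_points" using vS S by auto
  define u where "u = omega^(a+1)"
  have u1: "u * cnj u = 1"
  proof -
    have "of_real ((cmod u)^2) = u * cnj u" by (rule complex_norm_square)
    moreover have "cmod u = 1" unfolding u_def by (rule cmod_omega_pow)
    ultimately show ?thesis by simp
  qed
  have ox: "u * cnj omega = omega^a"
  proof -
    have "u * cnj omega = omega^a * (omega * cnj omega)" by (simp add: u_def algebra_simps)
    then show ?thesis by (simp add: omega_times_cnj)
  qed
  have oy: "u * omega = omega^(a+2)" by (simp add: u_def algebra_simps power2_eq_square)
  have oq2: "omega^(a+4) = - u" using omega_pow_add3[of "a+1"] by (simp add: u_def add.commute add.left_commute)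
  define x where "x = v + omega^a"
  define y where "y = v + omega^(a+2)"
  have xv: "x \<noteq> v" by (simp add: x_def)
  obtain g where g: "path g" "pathstart g = x" "pathfinish g = y" "path_image g \<subseteq> drawing (S - {v})"
    using poly_path[OF conn[folded x_def y_def]] xS xv by (auto simp: x_def)
  define P where "P = reversepath g"
  have P: "path P" "pathstart P = v + u * omega" "pathfinish P = v + u * cnj omega"
      "path_image P \<subseteq> drawing (S - {v})"
    using g by (auto simp: P_def ox oy x_def y_def)
  have S': "S - {v} \<subseteq> tri_points" using S by auto
  have avoid: "path_image P \<inter> closed_segment (v - u) (v + u) = {}"
  proof (rule ccontr)
    assume "path_image P \<inter> closed_segment (v - u) (v + u) \<noteq> {}"
    then obtain z where zP: "z \<in> drawing (S - {v})" and zs: "z \<in> closed_segment (v - u) (v + u)"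
      using P(4) by blast
    have u0: "u \<noteq> 0" using u1 by auto
    have "z \<in> closed_segment (v + u * (-1)) (v + u * 1)" using zs by simp
    then have "(z - v)/u \<in> closed_segment (-1) 1" using seg_affine'[OF u0, of z v "-1" 1] by blast
    then have "(z - v)/u \<in> closed_segment (of_real (-1)) (of_real 1)" by simp
    from seg_re_im[OF this] obtain t where t: "0 \<le> t" "t \<le> 1" "Re ((z-v)/u) = -1 + t * 2" "Im ((z-v)/u) = 0"
      by auto
    define r where "r = -1 + t * 2"
    have "(z - v)/u = of_real r" using t by (simp add: complex_eq_iff r_def)
    then have zr: "z = v + of_real r * u" using u0 by (simp add: field_simps)
    show False
    proof (cases "r = 0")
      case True
      then have "z = v" using zr by simp
      then show False using zP not_on_edge_vertex[OF S' v] by auto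
    next
      case False
      show False
      proof (cases "0 < r")
        case True
        have "z \<in> closed_segment v (v + omega^(a+1))" unfolding seg_param
          using True t zr by (intro exI[of _ r]) (auto simp: r_def u_def)
        from not_in_drawing[OF S' v _ this] zr False q1S zP u0 show False by auto
      next
        case False2: False
        have "z \<in> closed_segment v (v + omega^(a+4))" unfolding seg_param oq2
          using False2 t zr by (intro exI[of _ "-r"]) (auto simp: r_def algebra_simps)
        from not_in_drawing[OF S' v _ this] zr False q2S zP u0 show False by auto
      qed
    qed
  qed
  define \<gamma> where "\<gamma> = linepath (v + u * cnj omega) v +++ (linepath v (v + u * omega) +++ P)"
  have wne: "winding_number \<gamma> (v + u) \<noteq> winding_number \<gamma> (v - u)"
    unfolding \<gamma>_def by (rule key_wn[OF u1 P(1-3) avoid])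
  have pg: "path \<gamma>" and cg: "pathfinish \<gamma> = pathstart \<gamma>"
    using P by (auto simp: \<gamma>_def)
  have adjx: "tri_adj v x" using tri_adj_iff[OF v] by (auto simp: x_def intro: exI[of _ "a mod 6"] simp flip: omega_pow_mod)
  have adjy: "tri_adj v y" using tri_adj_iff[OF v] by (auto simp: y_def intro: exI[of _ "(a+2) mod 6"] simp flip: omega_pow_mod)
  have ig: "path_image \<gamma> \<subseteq> drawing S"
  proof -
    have "closed_segment x v \<subseteq> drawing S" using edge_in_drawing[OF vS _ adjx] xS
      by (simp add: x_def closed_segment_commute)
    moreover have "closed_segment v y \<subseteq> drawing S" using edge_in_drawing[OF vS _ adjy] yS by (simp add: y_def)
    moreover have "path_image P \<subseteq> drawing S" using P(4) drawing_mono[of "S - {v}" S] by auto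
    ultimately show ?thesis using P by (auto simp: \<gamma>_def path_image_join ox oy x_def y_def)
  qed
  obtain k where zk: "winding_number \<gamma> (v + omega^k) \<noteq> 0" and kS: "v + omega^k \<notin> S"
  proof (cases "winding_number \<gamma> (v + u) = 0")
    case True
    then have "winding_number \<gamma> (v + omega^(a+4)) \<noteq> 0" using wne oq2 by simp
    then show ?thesis using that q2S by blast
  next
    case False
    then show ?thesis using that[of "a+1"] q1S by (simp add: u_def)
  qed
  define z where "z = v + omega^k"
  have znd: "z \<notin> drawing S" unfolding z_def
    by (rule not_in_drawing[OF S v kS]) auto
  have zT: "z \<in> tri_points" unfolding z_def by (rule tri_add[OF v tri_omega_pow])
  have "z \<notin> outside (path_image \<gamma>)"
    using winding_number_zero_in_outside[OF pg cg] zk by (auto simp: z_def)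
  then have bd: "bounded (connected_component_set (- path_image \<gamma>) z)"
    by (simp add: outside)
  define F where "F = connected_component_set (- drawing S) z"
  have "F \<subseteq> connected_component_set (- path_image \<gamma>) z"
    unfolding F_def by (rule connected_component_mono) (use ig in auto)
  then have "bounded F" using bd bounded_subset by blast
  moreover have "F \<in> faces S" unfolding F_def faces_def using znd by (intro componentsI) simp
  moreover have "z \<in> F" unfolding F_def using znd by (simp add: connected_component_refl)
  ultimately have "is_hole S F" using zT kS unfolding is_hole_def z_def by blast
  then show False using sc by (auto simp: simply_connected_shape_def)
qed

definition dirs :: "complex set \<Rightarrow> complex \<Rightarrow> nat set" where
  "dirs S v = {k. k < 6 \<and> v + omega^k \<in> S}"

definition goodfam :: "nat set set" where
  "goodfam = {{2},{3},{4},{2,3},{3,4},{2,3,4},{5},{0},{1},{0,5},{0,1},{0,1,5}}"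

definition good :: "complex set \<Rightarrow> complex \<Rightarrow> bool" where
  "good S v \<longleftrightarrow> v \<in> S \<and> dirs S v \<in> goodfam"

definition Hc :: "complex set \<Rightarrow> bool" where
  "Hc S \<longleftrightarrow> (\<forall>v a. v \<in> S \<and> v + omega^a \<in> S \<and> v + omega^(a+2) \<in> S \<and> v + omega^(a+1) \<notin> S
      \<and> v + omega^(a+4) \<notin> S \<longrightarrow> (v + omega^a, v + omega^(a+2)) \<notin> (RA (S - {v}))\<^sup>*)"

definition hyps :: "complex set \<Rightarrow> bool" where
  "hyps S \<longleftrightarrow> finite S \<and> S \<subseteq> tri_points \<and> induced_connected S \<and> 2 \<le> card S \<and> Hc S"

lemma dichotomy_max: assumes "A \<subseteq> {2,3,4}" "A \<noteq> {}" shows "A \<in> goodfam \<or> A = {2,4::nat}"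
proof (cases "2 \<in> A"; cases "3 \<in> A"; cases "4 \<in> A")
  assume "2 \<in> A" "3 \<in> A" "4 \<in> A" then have "A = {2,3,4}" using assms by auto
  then show ?thesis by (simp add: goodfam_def)
next
  assume "2 \<in> A" "3 \<in> A" "4 \<notin> A" then have "A = {2,3}" using assms by auto
  then show ?thesis by (simp add: goodfam_def)
next
  assume "2 \<in> A" "3 \<notin> A" "4 \<in> A" then have "A = {2,4}" using assms by auto
  then show ?thesis by simp
next
  assume "2 \<in> A" "3 \<notin> A" "4 \<notin> A" then have "A = {2}" using assms by auto
  then show ?thesis by (simp add: goodfam_def)
next
  assume "2 \<notin> A" "3 \<in> A" "4 \<in> A" then have "A = {3,4}" using assms by auto
  then show ?thesis by (simp add: goodfam_def)
next
  assume "2 \<notin> A" "3 \<in> A" "4 \<notin> A" then have "A = {3}" using assms by auto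
  then show ?thesis by (simp add: goodfam_def)
next
  assume "2 \<notin> A" "3 \<notin> A" "4 \<in> A" then have "A = {4}" using assms by auto
  then show ?thesis by (simp add: goodfam_def)
next
  assume "2 \<notin> A" "3 \<notin> A" "4 \<notin> A" then have "A = {}" using assms by auto
  then show ?thesis using assms by simp
qed

lemma dichotomy_min: assumes "A \<subseteq> {0,1,5}" "A \<noteq> {}" shows "A \<in> goodfam \<or> A = {1,5::nat}"
proof (cases "0 \<in> A"; cases "1 \<in> A"; cases "5 \<in> A")
  assume "0 \<in> A" "1 \<in> A" "5 \<in> A" then have "A = {0,1,5}" using assms by auto
  then show ?thesis by (simp add: goodfam_def)
next
  assume "0 \<in> A" "1 \<in> A" "5 \<notin> A" then have "A = {0,1}" using assms by auto
  then show ?thesis by (simp add: goodfam_def)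
next
  assume "0 \<in> A" "1 \<notin> A" "5 \<in> A" then have "A = {0,5}" using assms by auto
  then show ?thesis by (simp add: goodfam_def)
next
  assume "0 \<in> A" "1 \<notin> A" "5 \<notin> A" then have "A = {0}" using assms by auto
  then show ?thesis by (simp add: goodfam_def)
next
  assume "0 \<notin> A" "1 \<in> A" "5 \<in> A" then have "A = {1,5}" using assms by auto
  then show ?thesis by simp
next
  assume "0 \<notin> A" "1 \<in> A" "5 \<notin> A" then have "A = {1}" using assms by auto
  then show ?thesis by (simp add: goodfam_def)
next
  assume "0 \<notin> A" "1 \<notin> A" "5 \<in> A" then have "A = {5}" using assms by auto
  then show ?thesis by (simp add: goodfam_def)
next
  assume "0 \<notin> A" "1 \<notin> A" "5 \<notin> A" then have "A = {}" using assms by auto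
  then show ?thesis using assms by simp
qed

lemma Re_omega_pow: "Re (omega^0) = 1" "Re (omega^1) = 1/2" "Re (omega^2) = -1/2" "Re (omega^3) = -1"
  "Re (omega^4) = -1/2" "Re (omega^5) = 1/2"
proof -
  have "omega^4 = - omega" using omega_pow_add3[of 1] by simp
  moreover have "omega^5 = 1 - omega" using omega_pow_add3[of 2] by (simp add: omega2)
  ultimately show "Re (omega^0) = 1" "Re (omega^1) = 1/2" "Re (omega^2) = -1/2" "Re (omega^3) = -1"
    "Re (omega^4) = -1/2" "Re (omega^5) = 1/2" by (simp_all add: omega2 omega3)
qed

lemma dirs_max: assumes "\<forall>w\<in>S. Re w \<le> Re v" shows "dirs S v \<subseteq> {2,3,4}"
proof
  fix k assume k: "k \<in> dirs S v"
  then have "k < 6" "Re (v + omega^k) \<le> Re v" using assms by (auto simp: dirs_def)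
  moreover have "k = 0 \<or> k = 1 \<or> k = 2 \<or> k = 3 \<or> k = 4 \<or> k = 5" using \<open>k < 6\<close> by auto
  ultimately show "k \<in> {2,3,4}" using Re_omega_pow by auto
qed

lemma dirs_min: assumes "\<forall>w\<in>S. Re v \<le> Re w" shows "dirs S v \<subseteq> {0,1,5}"
proof
  fix k assume k: "k \<in> dirs S v"
  then have "k < 6" "Re v \<le> Re (v + omega^k)" using assms by (auto simp: dirs_def)
  moreover have "k = 0 \<or> k = 1 \<or> k = 2 \<or> k = 3 \<or> k = 4 \<or> k = 5" using \<open>k < 6\<close> by auto
  ultimately show "k \<in> {0,1,5}" using Re_omega_pow by auto
qed

lemma RA_eq: "{(u, v). u \<in> A \<and> v \<in> A \<and> tri_adj u v} = RA A" by (simp add: RA_def)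

lemma tri_adj_sym: "tri_adj u w \<Longrightarrow> tri_adj w u"
  by (auto simp: tri_adj_def dist_commute)

lemma RA_sym: "sym (RA A)" by (auto simp: RA_def sym_def intro: tri_adj_sym)

lemma RA_rtrancl_sym: "(a, b) \<in> (RA A)\<^sup>* \<Longrightarrow> (b, a) \<in> (RA A)\<^sup>*"
  using sym_rtrancl[OF RA_sym] by (auto simp: sym_def)

lemma dirs_nonempty:
  assumes h: "hyps S" and vS: "v \<in> S"
  shows "dirs S v \<noteq> {}"
proof -
  have fin: "finite S" and S: "S \<subseteq> tri_points" and c: "induced_connected S" and "2 \<le> card S"
    using h by (auto simp: hyps_def)
  obtain w where w: "w \<in> S" "w \<noteq> v"
  proof (rule ccontr)
    assume "\<not> thesis"
    then have "S \<subseteq> {v}" using that by auto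
    then have "card S \<le> card {v}" by (intro card_mono) auto
    then have "card S \<le> 1" by simp
    then show False using \<open>2 \<le> card S\<close> by simp
  qed
  have "(v, w) \<in> (RA S)\<^sup>*" using c vS w by (auto simp: induced_connected_def RA_eq)
  then obtain y where "(v, y) \<in> RA S"
    using w(2) by (metis converse_rtranclE)
  then have "y \<in> S" "tri_adj v y" by (auto simp: RA_def)
  then obtain k where "k < 6" "y = v + omega^k" using tri_adj_iff[of v y] vS S by auto
  then have "k \<in> dirs S v" using \<open>y \<in> S\<close> by (simp add: dirs_def)
  then show ?thesis by auto
qed

lemma adj_any: "w \<in> tri_points \<Longrightarrow> tri_adj w (w + omega^k)"
proof -
  assume w: "w \<in> tri_points"
  have "k mod 6 < 6" by simp
  then have "\<exists>j<6. w + omega^k = w + omega^j" using omega_pow_mod[of k] by (intro exI[of _ "k mod 6"]) simp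
  then show ?thesis using tri_adj_iff[OF w] by blast
qed

lemma omega_pow_ne2: "omega^a \<noteq> omega^(a+2)"
proof
  assume "omega^a = omega^(a+2)"
  moreover have "omega^(a+2) = omega^a * omega^2" by (simp only: power_add)
  ultimately have "omega^a * omega^2 = omega^a * 1" by simp
  then have "omega^2 = 1" using omega_pow_nz[of a] mult_left_cancel by blast
  then have "omega - 1 = 1" by (simp only: omega2)
  moreover have "omega - 1 \<noteq> 1" by (simp add: omega_eq complex_eq_iff)
  ultimately show False by blast
qed

lemma piece:
  assumes h: "hyps S" and vS: "v \<in> S" and xS: "x \<in> S" and xv: "x \<noteq> v" and adj: "tri_adj v x"
    and C_def: "C = {w. (x, w) \<in> (RA (S - {v}))\<^sup>*}"
    and nbr: "\<forall>w\<in>C. tri_adj v w \<longrightarrow> w = x"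
    and yS: "y \<in> S" and yC: "y \<notin> insert v C"
  shows "hyps (insert v C)" "card (insert v C) < card S"
    "\<And>w k. w \<in> C \<Longrightarrow> w + omega^k \<in> S \<longleftrightarrow> w + omega^k \<in> insert v C" "C \<subseteq> S - {v}"
proof -
  have fin: "finite S" and S: "S \<subseteq> tri_points" and c: "induced_connected S" and hc: "Hc S"
    using h by (auto simp: hyps_def)
  show CS: "C \<subseteq> S - {v}"
  proof
    fix w assume "w \<in> C"
    then have "(x, w) \<in> (RA (S - {v}))\<^sup>*" by (simp add: C_def)
    then show "w \<in> S - {v}"
      by (induction rule: rtrancl_induct) (use xS xv in \<open>auto simp: RA_def\<close>)
  qed
  have xC: "x \<in> C" by (simp add: C_def)
  have transfer: "w + omega^k \<in> S \<longleftrightarrow> w + omega^k \<in> insert v C" if wC: "w \<in> C" for w k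
  proof
    assume p: "w + omega^k \<in> S"
    show "w + omega^k \<in> insert v C"
    proof (cases "w + omega^k = v")
      case False
      have wS: "w \<in> S - {v}" using wC CS by auto
      then have "tri_adj w (w + omega^k)" using S adj_any by auto
      then have "(w, w + omega^k) \<in> RA (S - {v})" using wS p False by (auto simp: RA_def)
      moreover have "(x, w) \<in> (RA (S - {v}))\<^sup>*" using wC by (simp add: C_def)
      ultimately have "(x, w + omega^k) \<in> (RA (S - {v}))\<^sup>*" by simp
      then show ?thesis by (simp add: C_def)
    qed simp
  qed (use CS vS in auto)
  then show "\<And>w k. w \<in> C \<Longrightarrow> w + omega^k \<in> S \<longleftrightarrow> w + omega^k \<in> insert v C" by blast
  define S1 where "S1 = insert v C"
  have S1S: "S1 \<subseteq> S" using CS vS by (auto simp: S1_def)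
  have finS1: "finite S1" using S1S fin finite_subset by blast
  show "card (insert v C) < card S"
    using S1S yS yC fin by (intro psubset_card_mono) (auto simp: S1_def)
  have "card {v, x} \<le> card S1" using finS1 xC by (intro card_mono) (auto simp: S1_def)
  then have c2: "2 \<le> card S1" using xv by simp
  have toC: "(x, w) \<in> (RA S1)\<^sup>*" if "(x, w) \<in> (RA (S - {v}))\<^sup>*" for w
    using that
  proof (induction rule: rtrancl_induct)
    case (step a b)
    have "a \<in> C" "b \<in> C" using step by (auto simp: C_def)
    then have "(a, b) \<in> RA S1" using step(2) by (auto simp: RA_def S1_def)
    then show ?case using step(3) by simp
  qed simp
  have root: "(x, w) \<in> (RA S1)\<^sup>*" if "w \<in> S1" for w
  proof (cases "w = v")
    case True
    have "(x, v) \<in> RA S1" using xC adj tri_adj_sym by (auto simp: RA_def S1_def)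
    then show ?thesis using True by simp
  next
    case False
    then have "w \<in> C" using that by (simp add: S1_def)
    then show ?thesis using toC by (simp add: C_def)
  qed
  have conn1: "induced_connected S1"
    unfolding induced_connected_def RA_eq
  proof (intro ballI)
    fix p q assume "p \<in> S1" "q \<in> S1"
    then have "(p, x) \<in> (RA S1)\<^sup>*" "(x, q) \<in> (RA S1)\<^sup>*" using root RA_rtrancl_sym by blast+
    then show "(p, q) \<in> (RA S1)\<^sup>*" by simp
  qed
  have hc1: "Hc S1"
    unfolding Hc_def
  proof (intro allI impI)
    fix w a
    assume pat: "w \<in> S1 \<and> w + omega^a \<in> S1 \<and> w + omega^(a+2) \<in> S1 \<and> w + omega^(a+1) \<notin> S1 \<and> w + omega^(a+4) \<notin> S1"
    show "(w + omega^a, w + omega^(a+2)) \<notin> (RA (S1 - {w}))\<^sup>*"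
    proof (cases "w = v")
      case True
      have v: "v \<in> tri_points" using vS S by auto
      have "v + omega^a \<in> C" "v + omega^(a+2) \<in> C" using pat True by (auto simp: S1_def)
      then have "v + omega^a = x" "v + omega^(a+2) = x" using nbr adj_any[OF v] by blast+
      then have "omega^a = omega^(a+2)" by (metis add_left_cancel)
      then show ?thesis using omega_pow_ne2[of a] by blast
    next
      case False
      then have wC: "w \<in> C" using pat by (simp add: S1_def)
      have "w \<in> S" using wC CS by auto
      moreover have "w + omega^a \<in> S" using pat transfer[OF wC, of a] unfolding S1_def by blast
      moreover have "w + omega^(a+2) \<in> S" using pat transfer[OF wC, of "a+2"] unfolding S1_def by blast
      moreover have "w + omega^(a+1) \<notin> S" using pat transfer[OF wC, of "a+1"] unfolding S1_def by blast
      moreover have "w + omega^(a+4) \<notin> S" using pat transfer[OF wC, of "a+4"] unfolding S1_def by blast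
      ultimately have nc: "(w + omega^a, w + omega^(a+2)) \<notin> (RA (S - {w}))\<^sup>*"
        using hc unfolding Hc_def by blast
      have "RA (S1 - {w}) \<subseteq> RA (S - {w})" using S1S by (auto simp: RA_def)
      then have "(RA (S1 - {w}))\<^sup>* \<subseteq> (RA (S - {w}))\<^sup>*" by (rule rtrancl_mono)
      then show ?thesis using nc by blast
    qed
  qed
  show "hyps (insert v C)"
    using finS1 S1S S conn1 c2 hc1 by (auto simp: hyps_def S1_def)
qed

lemma dirs_mem: "(k mod 6 \<in> dirs S v) \<longleftrightarrow> v + omega^k \<in> S"
  by (simp add: dirs_def omega_pow_mod[of k, symmetric])

lemma rec_step:
  assumes IH: "\<And>S'. card S' < card S \<Longrightarrow> hyps S' \<Longrightarrow> \<exists>g1 g2. g1 \<noteq> g2 \<and> good S' g1 \<and> good S' g2"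
    and h: "hyps S" and vS: "v \<in> S" and D: "dirs S v = {a mod 6, (a+2) mod 6}"
  shows "\<exists>g1 g2. g1 \<noteq> g2 \<and> good S g1 \<and> good S g2"
proof -
  have S: "S \<subseteq> tri_points" and hc: "Hc S" using h by (auto simp: hyps_def)
  have v: "v \<in> tri_points" using vS S by auto
  define x where "x = v + omega^a"
  define y where "y = v + omega^(a+2)"
  have xS: "x \<in> S" using dirs_mem[of a S v] D by (simp add: x_def)
  have yS: "y \<in> S" using dirs_mem[of "a+2" S v] D by (simp add: y_def)
  have "(a+1) mod 6 \<noteq> a mod 6" "(a+1) mod 6 \<noteq> (a+2) mod 6" by presburger+
  then have q1: "v + omega^(a+1) \<notin> S" using dirs_mem[of "a+1" S v] D by auto
  have "(a+4) mod 6 \<noteq> a mod 6" "(a+4) mod 6 \<noteq> (a+2) mod 6" by presburger+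
  then have q2: "v + omega^(a+4) \<notin> S" using dirs_mem[of "a+4" S v] D by auto
  have nc: "(x, y) \<notin> (RA (S - {v}))\<^sup>*"
    using hc vS xS yS q1 q2 unfolding Hc_def x_def y_def by blast
  have xy: "x \<noteq> y" using omega_pow_ne2[of a] by (simp add: x_def y_def)
  have xv: "x \<noteq> v" and yv: "y \<noteq> v" by (simp_all add: x_def y_def)
  have adjx: "tri_adj v x" and adjy: "tri_adj v y" unfolding x_def y_def by (rule adj_any[OF v])+
  have nbrs: "w = x \<or> w = y" if wS: "w \<in> S" and wa: "tri_adj v w" for w
  proof -
    obtain k where k: "k < 6" "w = v + omega^k" using tri_adj_iff[OF v] wa by auto
    then have "k \<in> dirs S v" using wS by (simp add: dirs_def)
    then have "k = a mod 6 \<or> k = (a+2) mod 6" using D by auto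
    then show ?thesis using k omega_pow_mod[of a] omega_pow_mod[of "a+2"] by (auto simp: x_def y_def)
  qed
  have sym_nc: "(y, x) \<notin> (RA (S - {v}))\<^sup>*" using nc RA_rtrancl_sym by blast
  have side: "\<exists>g. good S g \<and> (p, g) \<in> (RA (S - {v}))\<^sup>*"
    if pS: "p \<in> S" and pv: "p \<noteq> v" and adjp: "tri_adj v p" and pq: "p = x \<and> q = y \<or> p = y \<and> q = x"
      and npq: "(p, q) \<notin> (RA (S - {v}))\<^sup>*" for p q
  proof -
    define C where "C = {w. (p, w) \<in> (RA (S - {v}))\<^sup>*}"
    have qS: "q \<in> S" using pq xS yS by auto
    have nbr: "\<forall>w\<in>C. tri_adj v w \<longrightarrow> w = p"
    proof (intro ballI impI)
      fix w assume wC: "w \<in> C" and "tri_adj v w"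
      have CS: "C \<subseteq> S - {v}"
      proof
        fix w assume "w \<in> C"
        then have "(p, w) \<in> (RA (S - {v}))\<^sup>*" by (simp add: C_def)
        then show "w \<in> S - {v}"
          by (induction rule: rtrancl_induct) (use pS pv in \<open>auto simp: RA_def\<close>)
      qed
      then have "w = x \<or> w = y" using nbrs wC \<open>tri_adj v w\<close> by auto
      moreover have "w \<noteq> q" using wC npq by (auto simp: C_def)
      ultimately show "w = p" using pq by auto
    qed
    have qC: "q \<notin> insert v C" using npq pq xv yv by (auto simp: C_def)
    note pc = piece[OF h vS pS pv adjp C_def nbr qS qC]
    obtain g1 g2 where g: "g1 \<noteq> g2" "good (insert v C) g1" "good (insert v C) g2"
      using IH[OF pc(2) pc(1)] by blast
    obtain g where gC: "g \<in> C" and gg: "good (insert v C) g"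
      using g by (cases "g1 = v") (auto simp: good_def)
    have "dirs (insert v C) g = dirs S g" using pc(3)[OF gC] by (auto simp: dirs_def)
    moreover have "g \<in> S" using gC pc(4) by auto
    ultimately have "good S g" using gg by (simp add: good_def)
    then show ?thesis using gC by (auto simp: C_def)
  qed
  obtain g1 where g1: "good S g1" "(x, g1) \<in> (RA (S - {v}))\<^sup>*"
    using side[OF xS xv adjx _ nc] by blast
  obtain g2 where g2: "good S g2" "(y, g2) \<in> (RA (S - {v}))\<^sup>*"
    using side[OF yS yv adjy _ sym_nc] by blast
  have "g1 \<noteq> g2"
  proof
    assume "g1 = g2"
    then have "(g1, y) \<in> (RA (S - {v}))\<^sup>*" using g2(2) RA_rtrancl_sym by blast
    then have "(x, y) \<in> (RA (S - {v}))\<^sup>*" using g1(2) by simp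
    then show False using nc by blast
  qed
  then show ?thesis using g1 g2 by blast
qed

lemma ci: "hyps S \<Longrightarrow> \<exists>g1 g2. g1 \<noteq> g2 \<and> good S g1 \<and> good S g2"
proof (induction "card S" arbitrary: S rule: less_induct)
  case less
  have h: "hyps S" by fact
  have fin: "finite S" and S: "S \<subseteq> tri_points" and c2: "2 \<le> card S" using h by (auto simp: hyps_def)
  have ne: "S \<noteq> {}" using c2 by auto
  have IH: "\<And>S'. card S' < card S \<Longrightarrow> hyps S' \<Longrightarrow> \<exists>g1 g2. g1 \<noteq> g2 \<and> good S' g1 \<and> good S' g2"
    using less by blast
  obtain v where vS: "v \<in> S" and vmax: "\<forall>w\<in>S. Re w \<le> Re v"
  proof -
    have "Max (Re ` S) \<in> Re ` S" using fin ne by simp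
    then obtain v where "v \<in> S" "Re v = Max (Re ` S)" by auto
    moreover have "\<forall>w\<in>S. Re w \<le> Max (Re ` S)" using fin by simp
    ultimately show ?thesis using that by auto
  qed
  obtain v' where v'S: "v' \<in> S" and vmin: "\<forall>w\<in>S. Re v' \<le> Re w"
  proof -
    have "Min (Re ` S) \<in> Re ` S" using fin ne by simp
    then obtain v where "v \<in> S" "Re v = Min (Re ` S)" by auto
    moreover have "\<forall>w\<in>S. Min (Re ` S) \<le> Re w" using fin by simp
    ultimately show ?thesis using that by auto
  qed
  have d1: "dirs S v \<subseteq> {2,3,4}" "dirs S v \<noteq> {}" using dirs_max[OF vmax] dirs_nonempty[OF h vS] by auto
  have d2: "dirs S v' \<subseteq> {0,1,5}" "dirs S v' \<noteq> {}" using dirs_min[OF vmin] dirs_nonempty[OF h v'S] by auto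
  show ?case
  proof (cases "dirs S v = {2,4}")
    case True
    then have "dirs S v = {2 mod 6, (2+2) mod 6}" by simp
    from rec_step[OF IH h vS this] show ?thesis .
  next
    case False
    then have gv: "good S v" using dichotomy_max[OF d1] vS by (simp add: good_def)
    show ?thesis
    proof (cases "dirs S v' = {1,5}")
      case True
      then have "dirs S v' = {5 mod 6, (5+2) mod 6}" by auto
      from rec_step[OF IH h v'S this] show ?thesis .
    next
      case False
      then have gv': "good S v'" using dichotomy_min[OF d2] v'S by (simp add: good_def)
      obtain k where "k \<in> dirs S v" using d1 by auto
      then have k: "k \<in> {2,3,4}" "v + omega^k \<in> S" using d1 by (auto simp: dirs_def)
      then have "Re (v + omega^k) < Re v" using Re_omega_pow by auto
      then have "Re v' < Re v" using vmin k by force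
      then have "v \<noteq> v'" by auto
      then show ?thesis using gv gv' by blast
    qed
  qed
qed

lemma cyc_list: "cyc_interval i m = set (map (\<lambda>j. (i + j) mod 6) [0..<m])"
  by (auto simp: cyc_interval_def)

lemma ic_root: assumes "r \<in> A" "\<forall>w\<in>A. (r, w) \<in> (RA A)\<^sup>*" shows "induced_connected A"
  unfolding induced_connected_def RA_eq
proof (intro ballI)
  fix p q assume "p \<in> A" "q \<in> A"
  then have "(p, r) \<in> (RA A)\<^sup>*" "(r, q) \<in> (RA A)\<^sup>*" using assms RA_rtrancl_sym by blast+
  then show "(p, q) \<in> (RA A)\<^sup>*" by simp
qed

lemma adj_next: assumes v: "v \<in> tri_points" shows "tri_adj (v + omega^c) (v + omega^(c+1))"
proof -
  have "omega^c + omega^(c+2) = omega^c * (1 + omega^2)" by (simp only: power_add distrib_left mult_1_right)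
  also have "\<dots> = omega^c * omega" by (simp add: omega2)
  also have "\<dots> = omega^(c+1)" by (simp only: power_add power_one_right)
  finally have "omega^(c+1) = omega^c + omega^(c+2)" by simp
  then have e: "v + omega^(c+1) = (v + omega^c) + omega^(c+2)" by (simp add: add.assoc)
  show ?thesis unfolding e by (rule adj_any[OF tri_add[OF v tri_omega_pow[of c]]])
qed

lemma conn1: "induced_connected {p}"
  by (rule ic_root[of p]) auto

lemma conn2: assumes v: "v \<in> tri_points" shows "induced_connected {v + omega^c, v + omega^(c+1)}"
proof (rule ic_root[of "v + omega^c"])
  have "(v + omega^c, v + omega^(c+1)) \<in> RA {v + omega^c, v + omega^(c+1)}"
    using adj_next[OF v] by (simp add: RA_def)
  then show "\<forall>w\<in>{v + omega^c, v + omega^(c+1)}. (v + omega^c, w) \<in> (RA {v + omega^c, v + omega^(c+1)})\<^sup>*"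
    by auto
qed simp

lemma conn3: assumes v: "v \<in> tri_points" shows "induced_connected {v + omega^c, v + omega^(c+1), v + omega^(c+2)}"
proof (rule ic_root[of "v + omega^c"])
  let ?A = "{v + omega^c, v + omega^(c+1), v + omega^(c+2)}"
  have 1: "(v + omega^c, v + omega^(c+1)) \<in> RA ?A"
    using adj_next[OF v] by (simp add: RA_def)
  have 2: "(v + omega^(c+1), v + omega^(c+2)) \<in> RA ?A"
    using adj_next[OF v, of "c+1"] by (simp add: RA_def numeral_2_eq_2)
  have "(v + omega^c, v + omega^(c+2)) \<in> (RA ?A)\<^sup>*" using 1 2 by (meson r_into_rtrancl rtrancl_trans)
  then show "\<forall>w\<in>?A. (v + omega^c, w) \<in> (RA ?A)\<^sup>*" using 1 by auto
qed simp

lemma pattern_sce: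
  assumes sc: "simply_connected_shape S" and vS: "v \<in> S" and D: "dirs S v = A"
    and conn: "induced_connected ((\<lambda>k. v + omega^k) ` A)"
    and O: "{k. k < 6 \<and> k \<notin> A} = cyc_interval i m" and im: "i < 6" "0 < m" "m \<le> 6"
    and cardm: "2 < card (cyc_interval i m)"
  shows "sce S v"
proof -
  have S: "S \<subseteq> tri_points" using sc by (auto simp: simply_connected_shape_def shape_def)
  have v: "v \<in> tri_points" using vS S by auto
  have A: "k \<in> A \<longleftrightarrow> k < 6 \<and> v + omega^k \<in> S" for k using D by (auto simp: dirs_def)
  have od: "out_dirs S v = cyc_interval i m" unfolding O[symmetric] out_dirs_def using A by auto
  have nb: "{u \<in> S. tri_adj v u} = (\<lambda>k. v + omega^k) ` A"
    using tri_adj_iff[OF v] A by auto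
  have red: "redundant S v" unfolding redundant_def nb using vS conn by simp
  obtain k where "k \<in> out_dirs S v" using cardm od by (metis card.empty ex_in_conv not_less_zero zero_less_iff_neq_zero less_trans zero_less_numeral)
  then have "v + omega^k \<notin> S" by (simp add: out_dirs_def)
  then have ob: "v \<in> outer_boundary S" by (rule outer_bd[OF sc vS])
  have lb: "local_boundary S v (out_dirs S v)"
    unfolding local_boundary_def using vS im od by blast
  have "boundary_count (out_dirs S v) > 0" using cardm od by (simp add: boundary_count_def)
  then show ?thesis using red ob lb by (auto simp: sce_def erodable_def)
qed

lemma good_sce:
  assumes sc: "simply_connected_shape S" and g: "good S v"
  shows "sce S v"
proof -
  have S: "S \<subseteq> tri_points" using sc by (auto simp: simply_connected_shape_def shape_def)
  have vS: "v \<in> S" using g by (simp add: good_def)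
  have v: "v \<in> tri_points" using vS S by auto
  have o7: "omega^7 = omega" using omega6 by (simp add: power_add[of omega 6 1, simplified])
  have "dirs S v \<in> goodfam" using g by (simp add: good_def)
  then show ?thesis unfolding goodfam_def
  proof (elim insertE emptyE)
    assume D: "dirs S v = {2}"
    show ?thesis
    proof (rule pattern_sce[OF sc vS D])
      show "induced_connected ((\<lambda>k. v + omega^k) ` {2})" by (simp add: conn1)
      show "{k. k < 6 \<and> k \<notin> {2}} = cyc_interval 3 5" unfolding cyc_list by (simp add: upt_rec) auto
      show "2 < card (cyc_interval 3 5)" unfolding cyc_list by (simp add: upt_rec)
    qed simp_all
  next
    assume D: "dirs S v = {3}"
    show ?thesis
    proof (rule pattern_sce[OF sc vS D])
      show "induced_connected ((\<lambda>k. v + omega^k) ` {3})" by (simp add: conn1)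
      show "{k. k < 6 \<and> k \<notin> {3}} = cyc_interval 4 5" unfolding cyc_list by (simp add: upt_rec) auto
      show "2 < card (cyc_interval 4 5)" unfolding cyc_list by (simp add: upt_rec)
    qed simp_all
  next
    assume D: "dirs S v = {4}"
    show ?thesis
    proof (rule pattern_sce[OF sc vS D])
      show "induced_connected ((\<lambda>k. v + omega^k) ` {4})" by (simp add: conn1)
      show "{k. k < 6 \<and> k \<notin> {4}} = cyc_interval 5 5" unfolding cyc_list by (simp add: upt_rec) auto
      show "2 < card (cyc_interval 5 5)" unfolding cyc_list by (simp add: upt_rec)
    qed simp_all
  next
    assume D: "dirs S v = {2,3}"
    show ?thesis
    proof (rule pattern_sce[OF sc vS D])
      show "induced_connected ((\<lambda>k. v + omega^k) ` {2,3})" using conn2[OF v, of 2] by simp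
      show "{k. k < 6 \<and> k \<notin> {2,3}} = cyc_interval 4 4" unfolding cyc_list by (simp add: upt_rec) auto
      show "2 < card (cyc_interval 4 4)" unfolding cyc_list by (simp add: upt_rec)
    qed simp_all
  next
    assume D: "dirs S v = {3,4}"
    show ?thesis
    proof (rule pattern_sce[OF sc vS D])
      show "induced_connected ((\<lambda>k. v + omega^k) ` {3,4})" using conn2[OF v, of 3] by simp
      show "{k. k < 6 \<and> k \<notin> {3,4}} = cyc_interval 5 4" unfolding cyc_list by (simp add: upt_rec) auto
      show "2 < card (cyc_interval 5 4)" unfolding cyc_list by (simp add: upt_rec)
    qed simp_all
  next
    assume D: "dirs S v = {2,3,4}"
    show ?thesis
    proof (rule pattern_sce[OF sc vS D])
      show "induced_connected ((\<lambda>k. v + omega^k) ` {2,3,4})" using conn3[OF v, of 2] by simp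
      show "{k. k < 6 \<and> k \<notin> {2,3,4}} = cyc_interval 5 3" unfolding cyc_list by (simp add: upt_rec) auto
      show "2 < card (cyc_interval 5 3)" unfolding cyc_list by (simp add: upt_rec)
    qed simp_all
  next
    assume D: "dirs S v = {5}"
    show ?thesis
    proof (rule pattern_sce[OF sc vS D])
      show "induced_connected ((\<lambda>k. v + omega^k) ` {5})" by (simp add: conn1)
      show "{k. k < 6 \<and> k \<notin> {5}} = cyc_interval 0 5" unfolding cyc_list by (simp add: upt_rec) auto
      show "2 < card (cyc_interval 0 5)" unfolding cyc_list by (simp add: upt_rec)
    qed simp_all
  next
    assume D: "dirs S v = {0}"
    show ?thesis
    proof (rule pattern_sce[OF sc vS D])
      show "induced_connected ((\<lambda>k. v + omega^k) ` {0})" by (simp add: conn1)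
      show "{k. k < 6 \<and> k \<notin> {0}} = cyc_interval 1 5" unfolding cyc_list by (simp add: upt_rec) auto
      show "2 < card (cyc_interval 1 5)" unfolding cyc_list by (simp add: upt_rec)
    qed simp_all
  next
    assume D: "dirs S v = {1}"
    show ?thesis
    proof (rule pattern_sce[OF sc vS D])
      show "induced_connected ((\<lambda>k. v + omega^k) ` {1})" by (simp add: conn1)
      show "{k. k < 6 \<and> k \<notin> {1}} = cyc_interval 2 5" unfolding cyc_list by (simp add: upt_rec) auto
      show "2 < card (cyc_interval 2 5)" unfolding cyc_list by (simp add: upt_rec)
    qed simp_all
  next
    assume D: "dirs S v = {0,5}"
    show ?thesis
    proof (rule pattern_sce[OF sc vS D])
      show "induced_connected ((\<lambda>k. v + omega^k) ` {0,5})" using conn2[OF v, of 5] omega6 by (simp add: insert_commute)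
      show "{k. k < 6 \<and> k \<notin> {0,5}} = cyc_interval 1 4" unfolding cyc_list by (simp add: upt_rec) auto
      show "2 < card (cyc_interval 1 4)" unfolding cyc_list by (simp add: upt_rec)
    qed simp_all
  next
    assume D: "dirs S v = {0,1}"
    show ?thesis
    proof (rule pattern_sce[OF sc vS D])
      show "induced_connected ((\<lambda>k. v + omega^k) ` {0,1})" using conn2[OF v, of 0] by simp
      show "{k. k < 6 \<and> k \<notin> {0,1}} = cyc_interval 2 4" unfolding cyc_list by (simp add: upt_rec) auto
      show "2 < card (cyc_interval 2 4)" unfolding cyc_list by (simp add: upt_rec)
    qed simp_all
  next
    assume D: "dirs S v = {0,1,5}"
    show ?thesis
    proof (rule pattern_sce[OF sc vS D])
      show "induced_connected ((\<lambda>k. v + omega^k) ` {0,1,5})" using conn3[OF v, of 5] omega6 o7 by (simp add: insert_commute)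
      show "{k. k < 6 \<and> k \<notin> {0,1,5}} = cyc_interval 2 3" unfolding cyc_list by (simp add: upt_rec) auto
      show "2 < card (cyc_interval 2 3)" unfolding cyc_list by (simp add: upt_rec)
    qed simp_all
  qed
qed

theorem proposition2p3:
  assumes "simply_connected_shape S" and "card S \<ge> 2"
  shows "\<exists>v\<in>S. sce S v"
proof -
  have sc: "simply_connected_shape S" by fact
  have hc: "Hc S"
    unfolding Hc_def
  proof (intro allI impI notI)
    fix v a
    assume p: "v \<in> S \<and> v + omega^a \<in> S \<and> v + omega^(a+2) \<in> S \<and> v + omega^(a+1) \<notin> S \<and> v + omega^(a+4) \<notin> S"
      and c: "(v + omega^a, v + omega^(a+2)) \<in> (RA (S - {v}))\<^sup>*"
    show False using no_V_connection[OF sc _ _ _ _ _ c] p by blast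
  qed
  have "hyps S" using assms hc by (auto simp: hyps_def simply_connected_shape_def shape_def)
  then obtain g where "good S g" using ci by blast
  then show ?thesis using good_sce[OF sc] by (auto simp: good_def)
qed

end
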